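(* Let $\mathcal H$ be a Hilbert space of finite dimension $\Omega$ and let $\rho$ be a density matrix on $\mathcal H$ of rank $r$. (i) Every medium consistent family of histories with initial state $\rho$ contains at most $r\Omega$ histories of nonzero probability. (ii) There are infinitely many medium consistent families of histories with initial state $\rho$ that contain exactly $r\Omega$ histories of nonzero probability.
   Context: A set of projectors $\sigma=\{P_\alpha\}_{\alpha=1,\dots,m}$ on $\mathcal H$ is called exhaustive and exclusive if $\sum_{\alpha}P_\alpha=\mathbb 1$ and $P_\alpha P_\beta=\delta_{\alpha\beta}P_\alpha$. A family of histories $\mathcal S=\{\rho,\sigma^{(1)},\dots,\sigma^{(n)}\}$ consists of a density matrix $\rho$ (the initial state) and $n$ exhaustive exclusive sets of projectors $\sigma^{(j)}=\{P^{(j)}_{\alpha_j}\}_{\alpha_j=1,\dots,m_j}$ associated with times $t_1<\dots<t_n$, written in the Heisenberg picture ($P^{(j)}_{\alpha_j}=U(t_j,0)^\dagger\hat P^{(j)}_{\alpha_j}U(t_j,0)$ for a unitary evolution $U$; the family is specified by $\rho$ and these Heisenberg-picture sets). A history is a tuple $\alpha=(\alpha_1,\dots,\alpha_n)$ with history operator $C_\alpha=P^{(1)}_{\alpha_1}P^{(2)}_{\alpha_2}\cdots P^{(n)}_{\alpha_n}$; its probability is $Pr(\alpha)=\mathrm{Tr}\{C_\alpha^\dagger\rho C_\alpha\}$, and the coherence function is $D(\alpha;\beta)=\mathrm{Tr}\{C_\alpha^\dagger\rho C_\beta\}$. The family is medium consistent if $D(\alpha;\beta)=\delta_{\alpha\beta}Pr(\alpha)$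 for all histories $\alpha,\beta$, where $\delta_{\alpha\beta}=\prod_j\delta_{\alpha_j\beta_j}$. *)

theory Defs
  imports "Jordan_Normal_Form.Schur_Decomposition" "Jordan_Normal_Form.DL_Rank"
begin

text \<open>Finite-dimensional Hilbert space of dimension Omega = complex column vectors of length Omega;
operators = Omega x Omega complex matrices.\<close>

definition mtrace :: "complex mat \<Rightarrow> complex" where
  "mtrace A = (\<Sum>i<dim_row A. A $$ (i, i))"

definition hermitian_mat :: "nat \<Rightarrow> complex mat \<Rightarrow> bool" where
  "hermitian_mat n A \<longleftrightarrow> A \<in> carrier_mat n n \<and> mat_adjoint A = A"

definition density_matrix :: "nat \<Rightarrow> complex mat \<Rightarrow> bool" where
  "density_matrix n \<rho> \<longleftrightarrow> hermitian_mat n \<rho>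
     \<and> (\<forall>v \<in> carrier_vec n. 0 \<le> (\<Sum>i<n. cnj (v $ i) * (\<rho> *\<^sub>v v) $ i))
     \<and> mtrace \<rho> = 1"

definition mat_rank :: "nat \<Rightarrow> complex mat \<Rightarrow> nat" where
  "mat_rank n A = vec_space.rank n (A :: complex mat)"

definition projector :: "nat \<Rightarrow> complex mat \<Rightarrow> bool" where
  "projector n P \<longleftrightarrow> hermitian_mat n P \<and> P * P = P"

definition exh_excl :: "nat \<Rightarrow> complex mat list \<Rightarrow> bool" where
  "exh_excl n Ps \<longleftrightarrow> (\<forall>P \<in> set Ps. projector n P)
     \<and> foldr (+) Ps (0\<^sub>m n n) = 1\<^sub>m n
     \<and> (\<forall>a < length Ps. \<forall>b < length Ps. Ps ! a * Ps ! b = (if a = b then Ps ! a else 0\<^sub>m n n))"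

text \<open>A family of histories with initial state rho: a nonempty list of n exhaustive exclusive
sets (Heisenberg picture) associated with times t_1 < ... < t_n.\<close>
definition family :: "nat \<Rightarrow> complex mat list list \<Rightarrow> bool" where
  "family n \<sigma> \<longleftrightarrow> \<sigma> \<noteq> [] \<and> (\<forall>Ps \<in> set \<sigma>. exh_excl n Ps)"

definition histories :: "complex mat list list \<Rightarrow> nat list set" where
  "histories \<sigma> = {\<alpha>. length \<alpha> = length \<sigma> \<and> (\<forall>j < length \<sigma>. \<alpha> ! j < length (\<sigma> ! j))}"

definition history_op :: "nat \<Rightarrow> complex mat list list \<Rightarrow> nat list \<Rightarrow> complex mat" where
  "history_op n \<sigma> \<alpha> = foldr (\<lambda>(Ps, a) acc. (Ps ! a) * acc) (zip \<sigma> \<alpha>) (1\<^sub>m n)"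

definition coherence :: "nat \<Rightarrow> complex mat \<Rightarrow> complex mat list list \<Rightarrow> nat list \<Rightarrow> nat list \<Rightarrow> complex" where
  "coherence n \<rho> \<sigma> \<alpha> \<beta> = mtrace (mat_adjoint (history_op n \<sigma> \<alpha>) * \<rho> * history_op n \<sigma> \<beta>)"

definition hist_prob :: "nat \<Rightarrow> complex mat \<Rightarrow> complex mat list list \<Rightarrow> nat list \<Rightarrow> complex" where
  "hist_prob n \<rho> \<sigma> \<alpha> = mtrace (mat_adjoint (history_op n \<sigma> \<alpha>) * \<rho> * history_op n \<sigma> \<alpha>)"

definition medium_consistent :: "nat \<Rightarrow> complex mat \<Rightarrow> complex mat list list \<Rightarrow> bool" where
  "medium_consistent n \<rho> \<sigma> \<longleftrightarrow> family n \<sigma> \<and>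
     (\<forall>\<alpha> \<in> histories \<sigma>. \<forall>\<beta> \<in> histories \<sigma>.
        coherence n \<rho> \<sigma> \<alpha> \<beta> = (if \<alpha> = \<beta> then hist_prob n \<rho> \<sigma> \<alpha> else 0))"

definition nonzero_histories :: "nat \<Rightarrow> complex mat \<Rightarrow> complex mat list list \<Rightarrow> nat list set" where
  "nonzero_histories n \<rho> \<sigma> = {\<alpha> \<in> histories \<sigma>. hist_prob n \<rho> \<sigma> \<alpha> \<noteq> 0}"

end

theory Submission
  imports Defs
begin

lemma adj_dim_row[simp]: "dim_row (mat_adjoint (A::complex mat)) = dim_col A"
  by (simp add: mat_adjoint_def mat_of_rows_def)
lemma adj_dim_col[simp]: "dim_col (mat_adjoint (A::complex mat)) = dim_row A"
  by (simp add: mat_adjoint_def mat_of_rows_def)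

lemma adj_index[simp]: "i < dim_col (A::complex mat) \<Longrightarrow> j < dim_row A \<Longrightarrow> mat_adjoint A $$ (i,j) = cnj (A $$ (j,i))"
proof -
  assume a: "i < dim_col A" "j < dim_row A"
  have "mat_adjoint A $$ (i,j) = (map conjugate (cols A)) ! i $ j"
    unfolding mat_adjoint_def by (rule mat_of_rows_index) (use a in simp_all)
  also have "\<dots> = cnj (A $$ (j,i))" using a by simp
  finally show ?thesis .
qed

lemma adj_carrier[simp]: "(A::complex mat) \<in> carrier_mat n m \<Longrightarrow> mat_adjoint A \<in> carrier_mat m n"
  by (intro carrier_matI) (auto dest: carrier_matD)

lemma adj_adj[simp]: "mat_adjoint (mat_adjoint A) = (A::complex mat)"
  by (rule eq_matI) simp_all

lemma adj_mult: assumes "(A::complex mat) \<in> carrier_mat n k" "B \<in> carrier_mat k m"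
  shows "mat_adjoint (A * B) = mat_adjoint B * mat_adjoint A"
proof (rule eq_matI)
  have d: "dim_row A = n" "dim_col A = k" "dim_row B = k" "dim_col B = m" using assms by auto
  fix i j assume "i < dim_row (mat_adjoint B * mat_adjoint A)" "j < dim_col (mat_adjoint B * mat_adjoint A)"
  then have ij: "i < m" "j < n" using d by simp_all
  have "mat_adjoint (A * B) $$ (i, j) = cnj ((A * B) $$ (j, i))"
    by (rule adj_index) (use ij d in simp_all)
  also have "\<dots> = (\<Sum>l<k. cnj (A $$ (j,l)) * cnj (B $$ (l,i)))"
    using ij d by (simp add: scalar_prod_def atLeast0LessThan)
  also have "\<dots> = (mat_adjoint B * mat_adjoint A) $$ (i, j)"
    using ij d by (simp add: scalar_prod_def atLeast0LessThan mult.commute)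
  finally show "mat_adjoint (A * B) $$ (i, j) = (mat_adjoint B * mat_adjoint A) $$ (i, j)" .
next
  have d: "dim_row A = n" "dim_col A = k" "dim_row B = k" "dim_col B = m" using assms by auto
  show "dim_row (mat_adjoint (A * B)) = dim_row (mat_adjoint B * mat_adjoint A)"
    "dim_col (mat_adjoint (A * B)) = dim_col (mat_adjoint B * mat_adjoint A)" using d by simp_all
qed

lemma adj_one[simp]: "mat_adjoint (1\<^sub>m n) = (1\<^sub>m n :: complex mat)"
  by (rule eq_matI) simp_all

lemma adj_zero[simp]: "mat_adjoint (0\<^sub>m n m) = (0\<^sub>m m n :: complex mat)"
  by (rule eq_matI) simp_all

lemma adj_add: assumes "(A::complex mat) \<in> carrier_mat n m" "B \<in> carrier_mat n m"
  shows "mat_adjoint (A + B) = mat_adjoint A + mat_adjoint B"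
proof -
  have d: "dim_row A = n" "dim_col A = m" "dim_row B = n" "dim_col B = m" using assms by auto
  show ?thesis by (rule eq_matI) (use d in simp_all)
qed

lemma adj_smult: "mat_adjoint (c \<cdot>\<^sub>m (A::complex mat)) = cnj c \<cdot>\<^sub>m mat_adjoint A"
  by (rule eq_matI) simp_all

lemma mtrace_mult: assumes "A \<in> carrier_mat n m" "B \<in> carrier_mat m n"
  shows "mtrace (A * B) = (\<Sum>i<n. \<Sum>k<m. A $$ (i,k) * B $$ (k,i))"
proof -
  have d: "dim_row A = n" "dim_col A = m" "dim_row B = m" "dim_col B = n" using assms by auto
  show ?thesis using d by (simp add: mtrace_def scalar_prod_def atLeast0LessThan)
qed

lemma mtrace_comm: assumes "A \<in> carrier_mat n m" "B \<in> carrier_mat m n"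
  shows "mtrace (A * B) = mtrace (B * A)"
proof -
  have "mtrace (A * B) = (\<Sum>i<n. \<Sum>k<m. A $$ (i,k) * B $$ (k,i))"
    by (rule mtrace_mult[OF assms])
  also have "\<dots> = (\<Sum>k<m. \<Sum>i<n. B $$ (k,i) * A $$ (i,k))"
    by (subst sum.swap) (simp add: mult.commute)
  also have "\<dots> = mtrace (B * A)"
    by (rule mtrace_mult[OF assms(2,1), symmetric])
  finally show ?thesis .
qed

definition unitary :: "nat \<Rightarrow> complex mat \<Rightarrow> bool" where
  "unitary n U \<longleftrightarrow> U \<in> carrier_mat n n \<and> mat_adjoint U * U = 1\<^sub>m n \<and> U * mat_adjoint U = 1\<^sub>m n"

lemma mult3: "A \<in> carrier_mat n n \<Longrightarrow> B \<in> carrier_mat n n \<Longrightarrow> C \<in> carrier_mat n n \<Longrightarrow> A * B * C = A * (B * C)"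
  by (rule assoc_mult_mat)

lemma unitary_mult: assumes "unitary n U" "unitary n V" shows "unitary n (U * V)"
proof -
  have c: "U \<in> carrier_mat n n" "V \<in> carrier_mat n n" using assms by (auto simp: unitary_def)
  have u: "mat_adjoint U * U = 1\<^sub>m n" "U * mat_adjoint U = 1\<^sub>m n" using assms by (auto simp: unitary_def)
  have v: "mat_adjoint V * V = 1\<^sub>m n" "V * mat_adjoint V = 1\<^sub>m n" using assms by (auto simp: unitary_def)
  have ca: "mat_adjoint U \<in> carrier_mat n n" "mat_adjoint V \<in> carrier_mat n n" using c by auto
  have cuv1: "U * V \<in> carrier_mat n n" using c by (rule mult_carrier_mat)
  have cuv4: "mat_adjoint V * mat_adjoint U \<in> carrier_mat n n" by (rule mult_carrier_mat[OF ca(2) ca(1)])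
  have a: "mat_adjoint (U * V) = mat_adjoint V * mat_adjoint U" using adj_mult c by blast
  have "mat_adjoint V * mat_adjoint U * (U * V) = mat_adjoint V * (mat_adjoint U * (U * V))"
    by (rule mult3[OF ca(2) ca(1) cuv1])
  also have "mat_adjoint U * (U * V) = (mat_adjoint U * U) * V"
    by (rule mult3[OF ca(1) c(1) c(2), symmetric])
  also have "\<dots> = V" unfolding u(1) by (rule left_mult_one_mat[OF c(2)])
  finally have "mat_adjoint V * mat_adjoint U * (U * V) = mat_adjoint V * V" .
  then have 1: "mat_adjoint (U * V) * (U * V) = 1\<^sub>m n" unfolding a v(1) .
  have "U * V * (mat_adjoint V * mat_adjoint U) = U * (V * (mat_adjoint V * mat_adjoint U))"
    by (rule mult3[OF c(1) c(2) cuv4])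
  also have "V * (mat_adjoint V * mat_adjoint U) = (V * mat_adjoint V) * mat_adjoint U"
    by (rule mult3[OF c(2) ca(2) ca(1), symmetric])
  also have "\<dots> = mat_adjoint U" unfolding v(2) by (rule left_mult_one_mat[OF ca(1)])
  finally have "U * V * (mat_adjoint V * mat_adjoint U) = U * mat_adjoint U" .
  then have 2: "(U * V) * mat_adjoint (U * V) = 1\<^sub>m n" unfolding a u(2) .
  show ?thesis using 1 2 cuv1 by (simp add: unitary_def)
qed

lemma unitary_adj: "unitary n U \<Longrightarrow> unitary n (mat_adjoint U)"
  by (simp add: unitary_def)

lemma unitary_one: "unitary n (1\<^sub>m n)"
  by (simp add: unitary_def)

definition ext :: "complex \<Rightarrow> complex mat \<Rightarrow> complex mat" where
  "ext c X = mat (Suc (dim_row X)) (Suc (dim_row X))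
     (\<lambda>(i,j). if i = 0 then (if j = 0 then c else 0) else if j = 0 then 0 else X $$ (i-1, j-1))"

lemma ext_carrier: "X \<in> carrier_mat m m \<Longrightarrow> ext c X \<in> carrier_mat (Suc m) (Suc m)"
  unfolding ext_def by (auto dest: carrier_matD)

lemma ext_index: "X \<in> carrier_mat m m \<Longrightarrow> i < Suc m \<Longrightarrow> j < Suc m \<Longrightarrow>
  ext c X $$ (i,j) = (if i = 0 then (if j = 0 then c else 0) else if j = 0 then 0 else X $$ (i-1, j-1))"
  unfolding ext_def by (auto dest: carrier_matD)

lemma sum_Suc_split: "(\<Sum>k = 0..<Suc m. f k) = f 0 + (\<Sum>k<m. f (Suc k))"
  unfolding atLeast0LessThan by (rule sum.lessThan_Suc_shift)

lemma ext_mult: assumes X: "X \<in> carrier_mat m m" and Y: "Y \<in> carrier_mat m m"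
  shows "ext c X * ext d Y = ext (c * d) (X * Y)"
proof -
  have XY: "X * Y \<in> carrier_mat m m" using X Y by (rule mult_carrier_mat)
  have cX: "ext c X \<in> carrier_mat (Suc m) (Suc m)" using X by (rule ext_carrier)
  have cY: "ext d Y \<in> carrier_mat (Suc m) (Suc m)" using Y by (rule ext_carrier)
  have cXY: "ext (c*d) (X*Y) \<in> carrier_mat (Suc m) (Suc m)" using XY by (rule ext_carrier)
  have dX: "dim_row X = m" "dim_col X = m" using X by auto
  have dY: "dim_row Y = m" "dim_col Y = m" using Y by auto
  show ?thesis
  proof (rule eq_matI)
    fix i j assume "i < dim_row (ext (c * d) (X * Y))" "j < dim_col (ext (c * d) (X * Y))"
    then have i: "i < Suc m" and j: "j < Suc m" using cXY by auto
    have "(ext c X * ext d Y) $$ (i,j) = (\<Sum>k = 0..<Suc m. ext c X $$ (i,k) * ext d Y $$ (k,j))"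
      using i j cX cY by (simp add: scalar_prod_def)
    also have "\<dots> = ext c X $$ (i,0) * ext d Y $$ (0,j) + (\<Sum>k<m. ext c X $$ (i,Suc k) * ext d Y $$ (Suc k,j))"
      by (rule sum_Suc_split)
    also have "\<dots> = ext (c * d) (X * Y) $$ (i,j)"
    proof (cases i)
      case 0
      then show ?thesis using i j by (simp add: ext_index[OF XY] ext_index[OF X] ext_index[OF Y])
    next
      case (Suc i')
      note ii = this
      show ?thesis
      proof (cases j)
        case 0
        then show ?thesis using i j ii by (simp add: ext_index[OF XY] ext_index[OF X] ext_index[OF Y])
      next
        case (Suc j')
        then show ?thesis using i j ii dX dY
          by (simp add: ext_index[OF XY] ext_index[OF X] ext_index[OF Y] scalar_prod_def atLeast0LessThan)
      qed
    qed
    finally show "(ext c X * ext d Y) $$ (i,j) = ext (c * d) (X * Y) $$ (i,j)" .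
  qed (use cX cY cXY in auto)
qed

lemma ext_adj: assumes X: "X \<in> carrier_mat m m"
  shows "mat_adjoint (ext c X) = ext (cnj c) (mat_adjoint X)"
proof -
  have cX: "ext c X \<in> carrier_mat (Suc m) (Suc m)" using X by (rule ext_carrier)
  have aX: "mat_adjoint X \<in> carrier_mat m m" using X by simp
  have c2: "ext (cnj c) (mat_adjoint X) \<in> carrier_mat (Suc m) (Suc m)" using aX by (rule ext_carrier)
  have dX: "dim_row X = m" "dim_col X = m" using X by auto
  show ?thesis
  proof (rule eq_matI)
    fix i j assume "i < dim_row (ext (cnj c) (mat_adjoint X))" "j < dim_col (ext (cnj c) (mat_adjoint X))"
    then have i: "i < Suc m" and j: "j < Suc m" using c2 by auto
    show "mat_adjoint (ext c X) $$ (i,j) = ext (cnj c) (mat_adjoint X) $$ (i,j)"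
      using i j cX aX X dX by (cases i; cases j) (simp_all add: ext_index[OF X] ext_index[OF aX])
  qed (use cX c2 in auto)
qed

lemma ext_one: "ext 1 (1\<^sub>m m) = 1\<^sub>m (Suc m)"
proof -
  have c: "ext 1 (1\<^sub>m m) \<in> carrier_mat (Suc m) (Suc m)" by (rule ext_carrier) simp
  show ?thesis
  proof (rule eq_matI)
    fix i j assume "i < dim_row (1\<^sub>m (Suc m))" "j < dim_col (1\<^sub>m (Suc m))"
    then have i: "i < Suc m" and j: "j < Suc m" by auto
    show "ext 1 (1\<^sub>m m) $$ (i,j) = 1\<^sub>m (Suc m) $$ (i,j)"
      using i j by (cases i; cases j) (simp_all add: ext_index[OF one_carrier_mat])
  qed (use c in auto)
qed

lemma ext_unitary: assumes "unitary m U" shows "unitary (Suc m) (ext 1 U)"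
proof -
  have U: "U \<in> carrier_mat m m" and u1: "mat_adjoint U * U = 1\<^sub>m m" and u2: "U * mat_adjoint U = 1\<^sub>m m"
    using assms by (auto simp: unitary_def)
  have aU: "mat_adjoint U \<in> carrier_mat m m" using U by simp
  have "mat_adjoint (ext 1 U) * ext 1 U = 1\<^sub>m (Suc m)"
    unfolding ext_adj[OF U] ext_mult[OF aU U] u1 using ext_one by simp
  moreover have "ext 1 U * mat_adjoint (ext 1 U) = 1\<^sub>m (Suc m)"
    unfolding ext_adj[OF U] ext_mult[OF U aU] u2 using ext_one by simp
  ultimately show ?thesis using ext_carrier[OF U] by (simp add: unitary_def)
qed

lemma ext_diag: assumes "X \<in> carrier_mat m m" "diagonal_mat X" shows "diagonal_mat (ext c X)"
  unfolding diagonal_mat_def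
proof (intro allI impI)
  fix i j assume "i < dim_row (ext c X)" "j < dim_col (ext c X)" "i \<noteq> j"
  moreover have "ext c X \<in> carrier_mat (Suc m) (Suc m)" using assms(1) by (rule ext_carrier)
  ultimately have i: "i < Suc m" and j: "j < Suc m" and ij: "i \<noteq> j" by auto
  show "ext c X $$ (i, j) = 0"
    using i j ij assms by (cases i; cases j) (auto simp: ext_index[OF assms(1)] diagonal_mat_def dest: carrier_matD)
qed

lemma cprod_expand: assumes "a \<in> carrier_vec n" "b \<in> carrier_vec n"
  shows "a \<bullet>c b = (\<Sum>k<n. a $ k * cnj (b $ k))"
  using assms by (simp add: scalar_prod_def atLeast0LessThan)

lemma unit_first_col:
  fixes v :: "complex vec"
  assumes v: "v \<in> carrier_vec n" and v0: "v \<noteq> 0\<^sub>v n"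
  shows "\<exists>W c. unitary n W \<and> col W 0 = c \<cdot>\<^sub>v v"
proof -
  interpret cof_vec_space n "TYPE(complex)" .
  define b where "b = basis_completion v"
  from basis_completion[OF v v0, folded b_def]
  have dist_b: "distinct b" and indep: "\<not> lin_dep (set b)" and b: "set b \<subseteq> carrier_vec n"
    and hdb: "hd b = v" and len_b: "length b = n" by auto
  have n: "n \<noteq> 0"
  proof
    assume "n = 0"
    then have "v = 0\<^sub>v n" using v by (intro eq_vecI) auto
    then show False using v0 by simp
  qed
  from hdb len_b n obtain vs where bv: "b = v # vs" by (cases b) auto
  define ws where "ws = gram_schmidt n b"
  from gram_schmidt_result[OF b dist_b indep refl, folded ws_def]
  have ws: "set ws \<subseteq> carrier_vec n" "corthogonal ws" "length ws = n" by (auto simp: len_b)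
  from gram_schmidt_hd[OF v, of vs, folded bv] have hdws: "hd ws = v" unfolding ws_def .
  have ws0: "ws ! 0 = v" using hdws n ws(3) by (cases ws) auto
  have wsc: "i < n \<Longrightarrow> ws ! i \<in> carrier_vec n" for i using ws by auto
  define s where "s i = Re (ws ! i \<bullet>c ws ! i)" for i
  have sprop: "0 < s i \<and> ws ! i \<bullet>c ws ! i = complex_of_real (s i)" if i: "i < n" for i
  proof -
    have ge: "ws ! i \<bullet>c ws ! i \<ge> 0" by (rule conjugate_square_ge_0_vec)
    have ne: "ws ! i \<bullet>c ws ! i \<noteq> 0" using corthogonalD[OF ws(2)] i ws(3) by auto
    from ge have "Im (ws ! i \<bullet>c ws ! i) = 0" "Re (ws ! i \<bullet>c ws ! i) \<ge> 0"
      by (auto simp: less_eq_complex_def)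
    with ne show ?thesis unfolding s_def by (auto simp: complex_eq_iff)
  qed
  define f where "f i = complex_of_real (1 / sqrt (s i))" for i
  have ff: "cnj (f i) * f i * complex_of_real (s i) = 1" if "i < n" for i
  proof -
    have sp: "s i > 0" using sprop[OF that] by simp
    have cf: "cnj (f i) = f i" unfolding f_def by simp
    have "f i * f i * complex_of_real (s i) = complex_of_real ((1 / sqrt (s i)) * (1 / sqrt (s i)) * s i)"
      unfolding f_def by (simp only: of_real_mult)
    also have sq: "sqrt (s i) * sqrt (s i) = s i" using sp by simp
    then have "(1 / sqrt (s i)) * (1 / sqrt (s i)) * s i = 1"
      using sp by (simp add: divide_simps)
    finally show ?thesis unfolding cf by simp
  qed
  define W where "W = mat n n (\<lambda>(k,i). f i * ws ! i $ k)"
  have W: "W \<in> carrier_mat n n" unfolding W_def by simp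
  have Wi: "k < n \<Longrightarrow> i < n \<Longrightarrow> W $$ (k,i) = f i * ws ! i $ k" for k i unfolding W_def by simp
  have aW: "mat_adjoint W \<in> carrier_mat n n" using W by simp
  have 1: "mat_adjoint W * W = 1\<^sub>m n"
  proof (rule eq_matI)
    fix i j assume "i < dim_row (1\<^sub>m n)" "j < dim_col (1\<^sub>m n)"
    then have i: "i < n" and j: "j < n" by auto
    have "(mat_adjoint W * W) $$ (i,j) = (\<Sum>k<n. cnj (W $$ (k,i)) * W $$ (k,j))"
      using i j W by (simp add: scalar_prod_def atLeast0LessThan)
    also have "\<dots> = (\<Sum>k<n. cnj (f i) * f j * (ws ! j $ k * cnj (ws ! i $ k)))"
      by (rule sum.cong) (auto simp: Wi i j)
    also have "\<dots> = cnj (f i) * f j * (ws ! j \<bullet>c ws ! i)"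
      by (simp add: cprod_expand[OF wsc[OF j] wsc[OF i]] sum_distrib_left)
    also have "\<dots> = 1\<^sub>m n $$ (i,j)"
    proof (cases "i = j")
      case True
      then show ?thesis using sprop[OF i] ff[OF i] i by simp
    next
      case False
      then have "ws ! j \<bullet>c ws ! i = 0" using corthogonalD[OF ws(2)] i j ws(3) by auto
      then show ?thesis using False i j by simp
    qed
    finally show "(mat_adjoint W * W) $$ (i,j) = 1\<^sub>m n $$ (i,j)" .
  qed (use W in auto)
  have 2: "W * mat_adjoint W = 1\<^sub>m n" by (rule mat_mult_left_right_inverse[OF aW W 1])
  have u: "unitary n W" using W 1 2 by (simp add: unitary_def)
  have "col W 0 = f 0 \<cdot>\<^sub>v v"
  proof (rule eq_vecI)
    show "dim_vec (col W 0) = dim_vec (f 0 \<cdot>\<^sub>v v)" using W v by simp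
    fix k assume "k < dim_vec (f 0 \<cdot>\<^sub>v v)"
    then have k: "k < n" using v by simp
    show "col W 0 $ k = (f 0 \<cdot>\<^sub>v v) $ k" using k n v W by (simp add: Wi ws0)
  qed
  then show ?thesis using u by blast
qed

lemma eigen_exists:
  fixes A :: "complex mat"
  assumes A: "A \<in> carrier_mat (Suc m) (Suc m)"
  shows "\<exists>e v. v \<in> carrier_vec (Suc m) \<and> v \<noteq> 0\<^sub>v (Suc m) \<and> A *\<^sub>v v = e \<cdot>\<^sub>v v"
proof -
  obtain as where cp: "char_poly A = (\<Prod>a\<leftarrow>as. [:- a, 1:])" and len: "length as = Suc m"
    using char_poly_factorized[OF A] by blast
  then obtain e es where as: "as = e # es" by (cases as) auto
  have "eigenvalue A e" unfolding eigenvalue_root_char_poly[OF A] cp as by simp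
  then obtain v where "eigenvector A v e" unfolding eigenvalue_def by blast
  then show ?thesis using A unfolding eigenvector_def by auto
qed

lemma hermitian_decomp:
  fixes A :: "complex mat"
  assumes "A \<in> carrier_mat n n" "mat_adjoint A = A"
  shows "\<exists>U D. unitary n U \<and> D \<in> carrier_mat n n \<and> diagonal_mat D \<and> A = U * D * mat_adjoint U"
  using assms
proof (induction n arbitrary: A)
  case 0
  have "A = 1\<^sub>m 0 * A * mat_adjoint (1\<^sub>m 0)" using 0 by (intro eq_matI) auto
  moreover have "diagonal_mat A" using 0 by (auto simp: diagonal_mat_def)
  ultimately show ?case using 0 unitary_one by blast
next
  case (Suc m)
  note A = Suc.prems(1) and hA = Suc.prems(2)
  let ?n = "Suc m"
  obtain e v where v: "v \<in> carrier_vec ?n" and v0: "v \<noteq> 0\<^sub>v ?n" and ev: "A *\<^sub>v v = e \<cdot>\<^sub>v v"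
    using eigen_exists[OF A] by blast
  obtain W c where uW: "unitary ?n W" and cW: "col W 0 = c \<cdot>\<^sub>v v"
    using unit_first_col[OF v v0] by blast
  have W: "W \<in> carrier_mat ?n ?n" and W1: "mat_adjoint W * W = 1\<^sub>m ?n" and W2: "W * mat_adjoint W = 1\<^sub>m ?n"
    using uW by (auto simp: unitary_def)
  have aW: "mat_adjoint W \<in> carrier_mat ?n ?n" using W by simp
  have dW: "dim_row W = ?n" "dim_col W = ?n" using W by auto
  have dA: "dim_row A = ?n" "dim_col A = ?n" using A by auto
  have AW: "A * W \<in> carrier_mat ?n ?n" using A W by (rule mult_carrier_mat)
  define A' where "A' = mat_adjoint W * (A * W)"
  have A': "A' \<in> carrier_mat ?n ?n" unfolding A'_def using aW AW by (rule mult_carrier_mat)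
  have hA': "mat_adjoint A' = A'"
    unfolding A'_def adj_mult[OF aW AW] adj_mult[OF A W] adj_adj hA by (rule mult3[OF aW A W])
  have colAW: "col (A * W) 0 = e \<cdot>\<^sub>v col W 0"
  proof -
    have "col (A * W) 0 = A *\<^sub>v col W 0" by (rule col_mult2[OF A W]) simp
    also have "\<dots> = c \<cdot>\<^sub>v (A *\<^sub>v v)" unfolding cW by (rule mult_mat_vec[OF A v])
    also have "\<dots> = e \<cdot>\<^sub>v col W 0" unfolding ev cW smult_smult_assoc by (simp add: mult.commute)
    finally show ?thesis .
  qed
  have col0: "A' $$ (i,0) = (if i = 0 then e else 0)" if i: "i < ?n" for i
  proof -
    have "A' $$ (i,0) = row (mat_adjoint W) i \<bullet> col (A * W) 0"
      unfolding A'_def using i dW dA by simp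
    also have "\<dots> = e * (row (mat_adjoint W) i \<bullet> col W 0)"
      unfolding colAW using i dW by simp
    also have "row (mat_adjoint W) i \<bullet> col W 0 = (mat_adjoint W * W) $$ (i,0)"
      using i dW by simp
    also have "\<dots> = (if i = 0 then 1 else 0)" unfolding W1 using i by simp
    finally show ?thesis by simp
  qed
  have row0: "A' $$ (0,j) = 0" if j: "j < ?n" "j \<noteq> 0" for j
  proof -
    have "A' $$ (0,j) = mat_adjoint A' $$ (0,j)" unfolding hA' ..
    also have "\<dots> = cnj (A' $$ (j,0))" using A' j by simp
    finally show ?thesis using col0[OF j(1)] j by simp
  qed
  define A3 where "A3 = mat m m (\<lambda>(i,j). A' $$ (Suc i, Suc j))"
  have A3: "A3 \<in> carrier_mat m m" unfolding A3_def by simp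
  have hA3: "mat_adjoint A3 = A3"
  proof (rule eq_matI)
    fix i j assume "i < dim_row A3" "j < dim_col A3"
    then have i: "i < m" and j: "j < m" using A3 by auto
    have "mat_adjoint A3 $$ (i,j) = cnj (A' $$ (Suc j, Suc i))" using i j by (simp add: A3_def)
    also have "\<dots> = mat_adjoint A' $$ (Suc i, Suc j)" using i j A' by simp
    also have "\<dots> = A3 $$ (i,j)" unfolding hA' using i j by (simp add: A3_def)
    finally show "mat_adjoint A3 $$ (i,j) = A3 $$ (i,j)" .
  qed (use A3 in auto)
  obtain U' D' where uU': "unitary m U'" and D': "D' \<in> carrier_mat m m" and dD': "diagonal_mat D'"
    and A3eq: "A3 = U' * D' * mat_adjoint U'"
    using Suc.IH[OF A3 hA3] by blast
  have U': "U' \<in> carrier_mat m m" using uU' by (simp add: unitary_def)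
  have aU': "mat_adjoint U' \<in> carrier_mat m m" using U' by simp
  have UD': "U' * D' \<in> carrier_mat m m" using U' D' by (rule mult_carrier_mat)
  define a where "a = A' $$ (0,0)"
  have A'ext: "A' = ext a A3"
  proof (rule eq_matI)
    fix i j assume "i < dim_row (ext a A3)" "j < dim_col (ext a A3)"
    then have i: "i < ?n" and j: "j < ?n" using ext_carrier[OF A3, of a] by auto
    show "A' $$ (i,j) = ext a A3 $$ (i,j)"
    proof (cases "i = 0")
      case True
      then show ?thesis using j row0[OF j] by (cases "j = 0") (simp_all add: ext_index[OF A3] a_def)
    next
      case False
      then obtain i' where ii: "i = Suc i'" by (cases i) auto
      show ?thesis
      proof (cases "j = 0")
        case True
        then show ?thesis using col0[OF i] ii i by (simp add: ext_index[OF A3])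
      next
        case False
        then obtain j' where jj: "j = Suc j'" by (cases j) auto
        have "ext a A3 $$ (i,j) = A3 $$ (i',j')" using i j ii jj by (simp add: ext_index[OF A3])
        also have "\<dots> = A' $$ (i,j)" using i j ii jj by (simp add: A3_def)
        finally show ?thesis by simp
      qed
    qed
  qed (use A' ext_carrier[OF A3, of a] in auto)
  define U1 where "U1 = ext 1 U'"
  define D where "D = ext a D'"
  have uU1: "unitary ?n U1" unfolding U1_def by (rule ext_unitary[OF uU'])
  have U1: "U1 \<in> carrier_mat ?n ?n" unfolding U1_def by (rule ext_carrier[OF U'])
  have D: "D \<in> carrier_mat ?n ?n" unfolding D_def by (rule ext_carrier[OF D'])
  have aU1: "mat_adjoint U1 \<in> carrier_mat ?n ?n" using U1 by simp
  have dD: "diagonal_mat D" unfolding D_def by (rule ext_diag[OF D' dD'])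
  have A'eq: "A' = U1 * D * mat_adjoint U1"
  proof -
    have "U1 * D * mat_adjoint U1 = ext (1 * a) (U' * D') * ext 1 (mat_adjoint U')"
      unfolding U1_def D_def ext_adj[OF U'] ext_mult[OF U' D'] by simp
    also have "\<dots> = ext a A3"
      unfolding ext_mult[OF UD' aU'] A3eq by simp
    finally show ?thesis using A'ext by simp
  qed
  have "A = W * A' * mat_adjoint W"
  proof -
    have "W * A' * mat_adjoint W = W * (mat_adjoint W * (A * W)) * mat_adjoint W" unfolding A'_def ..
    also have "W * (mat_adjoint W * (A * W)) = (W * mat_adjoint W) * (A * W)"
      by (rule mult3[OF W aW AW, symmetric])
    also have "\<dots> = A * W" unfolding W2 by (rule left_mult_one_mat[OF AW])
    also have "A * W * mat_adjoint W = A * (W * mat_adjoint W)" by (rule mult3[OF A W aW])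
    also have "\<dots> = A" unfolding W2 by (rule right_mult_one_mat[OF A])
    finally show ?thesis by simp
  qed
  also have "\<dots> = W * (U1 * D * mat_adjoint U1) * mat_adjoint W" unfolding A'eq ..
  also have "\<dots> = (W * U1) * D * mat_adjoint (W * U1)"
  proof -
    have c1: "U1 * D \<in> carrier_mat ?n ?n" using U1 D by (rule mult_carrier_mat)
    have c2: "W * U1 \<in> carrier_mat ?n ?n" using W U1 by (rule mult_carrier_mat)
    have c3: "W * U1 * D \<in> carrier_mat ?n ?n" using c2 D by (rule mult_carrier_mat)
    have "W * (U1 * D * mat_adjoint U1) = W * (U1 * D) * mat_adjoint U1"
      by (rule mult3[OF W c1 aU1, symmetric])
    also have "W * (U1 * D) = W * U1 * D" by (rule mult3[OF W U1 D, symmetric])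
    finally have "W * (U1 * D * mat_adjoint U1) * mat_adjoint W = W * U1 * D * mat_adjoint U1 * mat_adjoint W" by simp
    also have "\<dots> = W * U1 * D * (mat_adjoint U1 * mat_adjoint W)" by (rule mult3[OF c3 aU1 aW])
    also have "mat_adjoint U1 * mat_adjoint W = mat_adjoint (W * U1)" by (rule adj_mult[OF W U1, symmetric])
    finally show ?thesis .
  qed
  finally show ?case using unitary_mult[OF uW uU1] D dD by blast
qed

lemma diag_right: assumes U: "U \<in> carrier_mat n n" and D: "D \<in> carrier_mat n n" and dD: "diagonal_mat D"
  and i: "i < n" and k: "k < n"
  shows "(U * D) $$ (i,k) = U $$ (i,k) * D $$ (k,k)"
proof -
  have "(U * D) $$ (i,k) = (\<Sum>l<n. U $$ (i,l) * D $$ (l,k))"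
    using U D i k by (simp add: scalar_prod_def atLeast0LessThan)
  also have "\<dots> = (\<Sum>l<n. if l = k then U $$ (i,k) * D $$ (k,k) else 0)"
    by (rule sum.cong) (use dD D k in \<open>auto simp: diagonal_mat_def\<close>)
  also have "\<dots> = U $$ (i,k) * D $$ (k,k)" using k by simp
  finally show ?thesis .
qed

lemma rho_entry: assumes U: "U \<in> carrier_mat n n" and D: "D \<in> carrier_mat n n" and dD: "diagonal_mat D"
  and i: "i < n" and j: "j < n"
  shows "(U * D * mat_adjoint U) $$ (i,j) = (\<Sum>k<n. U $$ (i,k) * D $$ (k,k) * cnj (U $$ (j,k)))"
proof -
  have UD: "U * D \<in> carrier_mat n n" using U D by (rule mult_carrier_mat)
  have dU: "dim_row U = n" "dim_col U = n" using U by auto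
  have dD2: "dim_row D = n" "dim_col D = n" using D by auto
  have "(U * D * mat_adjoint U) $$ (i,j) = (\<Sum>k<n. (U * D) $$ (i,k) * mat_adjoint U $$ (k,j))"
    using dU dD2 i j by (simp add: scalar_prod_def atLeast0LessThan)
  also have "\<dots> = (\<Sum>k<n. U $$ (i,k) * D $$ (k,k) * cnj (U $$ (j,k)))"
    by (rule sum.cong) (use diag_right[OF U D dD i] dU j in auto)
  finally show ?thesis .
qed

lemma unitary_orth: assumes "unitary n U" "a < n" "b < n"
  shows "(\<Sum>k<n. cnj (U $$ (k,a)) * U $$ (k,b)) = (if a = b then 1 else 0)"
proof -
  have U: "U \<in> carrier_mat n n" and u1: "mat_adjoint U * U = 1\<^sub>m n" using assms by (auto simp: unitary_def)
  have dU: "dim_row U = n" "dim_col U = n" using U by auto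
  have "(\<Sum>k<n. cnj (U $$ (k,a)) * U $$ (k,b)) = (mat_adjoint U * U) $$ (a,b)"
    using assms(2,3) dU by (simp add: scalar_prod_def atLeast0LessThan)
  also have "\<dots> = (if a = b then 1 else 0)" unfolding u1 using assms(2,3) by simp
  finally show ?thesis .
qed

lemma (in vec_space) mult_in_span:
  assumes A: "A \<in> carrier_mat n nc" and w: "w \<in> carrier_vec nc"
  shows "A *\<^sub>v w \<in> span (set (cols A))"
proof -
  define a where "a x = (\<Sum>j\<in>{j \<in> {..<nc}. col A j = x}. w $ j)" for x
  have cs: "set (cols A) = (\<lambda>j. col A j) ` {..<nc}"
    using A by (auto simp: cols_def)
  have cc: "set (cols A) \<subseteq> carrier_vec n" using A by (auto simp: cols_def)
  have eq: "A *\<^sub>v w = lincomb a (set (cols A))"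
  proof (rule eq_vecI)
    fix i assume "i < dim_vec (lincomb a (set (cols A)))"
    then have i: "i < n" using lincomb_dim[OF finite_set cc] by simp
    have "lincomb a (set (cols A)) $ i = (\<Sum>x\<in>set (cols A). a x * x $ i)"
      by (rule lincomb_index[OF i cc])
    also have "\<dots> = (\<Sum>x\<in>(\<lambda>j. col A j) ` {..<nc}. \<Sum>j\<in>{j \<in> {..<nc}. col A j = x}. w $ j * col A j $ i)"
      unfolding cs a_def by (rule sum.cong) (auto simp: sum_distrib_right)
    also have "\<dots> = (\<Sum>j<nc. w $ j * col A j $ i)"
      by (rule sum.image_gen[of "{..<nc}" "\<lambda>j. w $ j * col A j $ i" "\<lambda>j. col A j", symmetric]) simp
    also have "\<dots> = (A *\<^sub>v w) $ i"
      using A w i by (auto simp: scalar_prod_def atLeast0LessThan mult.commute intro: sum.cong)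
    finally show "(A *\<^sub>v w) $ i = lincomb a (set (cols A)) $ i" by simp
  next
    show "dim_vec (A *\<^sub>v w) = dim_vec (lincomb a (set (cols A)))"
      using lincomb_dim[OF finite_set cc] A by simp
  qed
  show ?thesis unfolding eq span_def by (auto intro!: exI[of _ a] exI[of _ "set (cols A)"])
qed

lemma rank_decomp:
  assumes uU: "unitary n U" and D: "D \<in> carrier_mat n n" and dD: "diagonal_mat D"
    and rho: "\<rho> = U * D * mat_adjoint U"
  shows "mat_rank n \<rho> = card {k. k < n \<and> D $$ (k,k) \<noteq> 0}"
proof -
  interpret vec_space "TYPE(complex)" n .
  define S where "S = {k. k < n \<and> D $$ (k,k) \<noteq> 0}"
  define B where "B = (\<lambda>k. col U k) ` S"
  have U: "U \<in> carrier_mat n n" using uU by (simp add: unitary_def)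
  have dU: "dim_row U = n" "dim_col U = n" using U by auto
  have rc: "\<rho> \<in> carrier_mat n n" unfolding rho
    by (rule mult_carrier_mat[OF mult_carrier_mat[OF U D] adj_carrier[OF U]])
  have drho: "dim_row \<rho> = n" "dim_col \<rho> = n" using rc by auto
  have Sn: "S \<subseteq> {..<n}" unfolding S_def by auto
  have finS: "finite S" using Sn finite_subset by blast
  have ent: "\<rho> $$ (i,j) = (\<Sum>k<n. U $$ (i,k) * D $$ (k,k) * cnj (U $$ (j,k)))" if "i < n" "j < n" for i j
    unfolding rho by (rule rho_entry[OF U D dD that])
  have orth: "(\<Sum>i<n. cnj (U $$ (i,a)) * U $$ (i,b)) = (if a = b then 1 else 0)" if "a < n" "b < n" for a b
    by (rule unitary_orth[OF uU that])
  have inj: "inj_on (\<lambda>k. col U k) S"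
  proof (rule inj_onI)
    fix a b assume a: "a \<in> S" and b: "b \<in> S" and eq: "col U a = col U b"
    have an: "a < n" and bn: "b < n" using a b Sn by auto
    have "U $$ (i,a) = U $$ (i,b)" if "i < n" for i
      using arg_cong[OF eq, of "\<lambda>v. v $ i"] that an bn dU by simp
    then have "(\<Sum>i<n. cnj (U $$ (i,a)) * U $$ (i,a)) = (\<Sum>i<n. cnj (U $$ (i,a)) * U $$ (i,b))"
      by (intro sum.cong) auto
    then show "a = b" using orth[OF an an] orth[OF an bn] by (auto split: if_splits)
  qed
  have Bc: "B \<subseteq> carrier_vec n" unfolding B_def using Sn dU by (auto intro!: carrier_vecI)
  have finB: "finite B" unfolding B_def using finS by simp
  have cardB: "card B = card S" unfolding B_def by (rule card_image[OF inj])
  have indep: "lin_indpt B"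
  proof
    assume ld: "lin_dep B"
    have "\<exists>A a v. finite A \<and> A \<subseteq> B \<and> lincomb a A = 0\<^sub>v n \<and> v \<in> A \<and> a v \<noteq> 0"
      using ld unfolding lin_dep_def by (auto simp: class_ring_simps module_vec_simps)
    then obtain A a v where A: "finite A" "A \<subseteq> B" and lc: "lincomb a A = 0\<^sub>v n" and vA: "v \<in> A" and av: "a v \<noteq> 0"
      by blast
    from vA A obtain k0 where k0: "k0 \<in> S" and vk: "v = col U k0" unfolding B_def by auto
    have k0n: "k0 < n" using k0 Sn by auto
    have Ac: "A \<subseteq> carrier_vec n" using A Bc by auto
    have "(\<Sum>i<n. cnj (U $$ (i,k0)) * lincomb a A $ i) = 0"
      unfolding lc by simp
    moreover have "(\<Sum>i<n. cnj (U $$ (i,k0)) * lincomb a A $ i)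
        = (\<Sum>i<n. \<Sum>x\<in>A. cnj (U $$ (i,k0)) * (a x * x $ i))"
      by (rule sum.cong) (auto simp: lincomb_index[OF _ Ac] sum_distrib_left)
    moreover have "\<dots> = (\<Sum>x\<in>A. a x * (\<Sum>i<n. cnj (U $$ (i,k0)) * x $ i))"
      by (subst sum.swap) (auto simp: sum_distrib_left ac_simps intro!: sum.cong)
    moreover have "\<dots> = (\<Sum>x\<in>A. if x = v then a x else 0)"
    proof (rule sum.cong)
      fix x assume xA: "x \<in> A"
      then obtain k where k: "k \<in> S" and xk: "x = col U k" using A unfolding B_def by auto
      have kn: "k < n" using k Sn by auto
      have "(\<Sum>i<n. cnj (U $$ (i,k0)) * x $ i) = (\<Sum>i<n. cnj (U $$ (i,k0)) * U $$ (i,k))"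
        unfolding xk by (rule sum.cong) (use kn dU in auto)
      also have "\<dots> = (if k0 = k then 1 else 0)" by (rule orth[OF k0n kn])
      finally show "a x * (\<Sum>i<n. cnj (U $$ (i,k0)) * x $ i) = (if x = v then a x else 0)"
        using xk vk inj k k0 by (auto simp: inj_on_def)
    qed simp
    moreover have "\<dots> = a v" using vA A(1) by simp
    ultimately have "a v = 0" by simp
    then show False using av by simp
  qed
  have maxB: "maximal B (\<lambda>T. T \<subseteq> B \<and> lin_indpt T)"
    unfolding maximal_def using indep by auto
  have dimB: "vectorspace.dim class_ring (span_vs B) = card B"
    by (rule dim_span[OF Bc finB maxB])
  have colsc: "set (cols \<rho>) \<subseteq> carrier_vec n" using rc by (auto simp: cols_def)
  have sub1: "set (cols \<rho>) \<subseteq> span B"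
  proof
    fix x assume "x \<in> set (cols \<rho>)"
    then obtain j where j: "j < n" and xj: "x = col \<rho> j" using drho by (auto simp: cols_def)
    define kof where "kof = inv_into S (\<lambda>k. col U k)"
    define c where "c y = D $$ (kof y, kof y) * cnj (U $$ (j, kof y))" for y
    have "x = lincomb c B"
    proof (rule eq_vecI)
      show "dim_vec x = dim_vec (lincomb c B)" using xj drho lincomb_dim[OF finB Bc] by simp
      fix i assume "i < dim_vec (lincomb c B)"
      then have i: "i < n" using lincomb_dim[OF finB Bc] by simp
      have "lincomb c B $ i = (\<Sum>y\<in>B. c y * y $ i)" by (rule lincomb_index[OF i Bc])
      also have "\<dots> = (\<Sum>k\<in>S. c (col U k) * col U k $ i)"
        unfolding B_def by (rule sum.reindex[OF inj, unfolded comp_def])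
      also have "\<dots> = (\<Sum>k\<in>S. U $$ (i,k) * D $$ (k,k) * cnj (U $$ (j,k)))"
      proof (rule sum.cong)
        fix k assume k: "k \<in> S"
        have "kof (col U k) = k" unfolding kof_def by (rule inv_into_f_f[OF inj k])
        then show "c (col U k) * col U k $ i = U $$ (i,k) * D $$ (k,k) * cnj (U $$ (j,k))"
          using k Sn i dU unfolding c_def by (auto simp: ac_simps)
      qed simp
      also have "\<dots> = (\<Sum>k<n. U $$ (i,k) * D $$ (k,k) * cnj (U $$ (j,k)))"
        by (rule sum.mono_neutral_left) (use Sn in \<open>auto simp: S_def\<close>)
      also have "\<dots> = x $ i" unfolding xj using i j drho by (simp add: ent)
      finally show "x $ i = lincomb c B $ i" by simp
    qed
    then show "x \<in> span B" unfolding span_def using finB by auto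
  qed
  have sub2: "B \<subseteq> span (set (cols \<rho>))"
  proof
    fix x assume "x \<in> B"
    then obtain k where k: "k \<in> S" and xk: "x = col U k" unfolding B_def by auto
    have kn: "k < n" and dk: "D $$ (k,k) \<noteq> 0" using k unfolding S_def by auto
    define c where "c = 1 / D $$ (k,k)"
    have cdk: "D $$ (k,k) * c = 1" unfolding c_def using dk by simp
    define w where "w = c \<cdot>\<^sub>v col U k"
    have wc: "w \<in> carrier_vec n" unfolding w_def using dU by (auto intro!: carrier_vecI)
    have "\<rho> *\<^sub>v w = x"
    proof (rule eq_vecI)
      show "dim_vec (\<rho> *\<^sub>v w) = dim_vec x" using xk drho dU by simp
      fix i assume "i < dim_vec x"
      then have i: "i < n" using xk dU by simp
      have "(\<rho> *\<^sub>v w) $ i = (\<Sum>j<n. \<rho> $$ (i,j) * w $ j)"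
        using i drho wc by (simp add: scalar_prod_def atLeast0LessThan)
      also have "\<dots> = (\<Sum>j<n. \<Sum>l<n. U $$ (i,l) * D $$ (l,l) * c * (cnj (U $$ (j,l)) * U $$ (j,k)))"
      proof (rule sum.cong[OF refl])
        fix j assume "j \<in> {..<n}"
        then have j: "j < n" by simp
        have "\<rho> $$ (i,j) * w $ j = (\<Sum>l<n. U $$ (i,l) * D $$ (l,l) * cnj (U $$ (j,l))) * (c * U $$ (j,k))"
          using j kn dU by (simp add: ent[OF i j] w_def)
        also have "\<dots> = (\<Sum>l<n. U $$ (i,l) * D $$ (l,l) * c * (cnj (U $$ (j,l)) * U $$ (j,k)))"
          unfolding sum_distrib_right by (rule sum.cong) (simp_all add: ac_simps)
        finally show "\<rho> $$ (i,j) * w $ j = (\<Sum>l<n. U $$ (i,l) * D $$ (l,l) * c * (cnj (U $$ (j,l)) * U $$ (j,k)))" .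
      qed
      also have "\<dots> = (\<Sum>l<n. U $$ (i,l) * D $$ (l,l) * c * (\<Sum>j<n. cnj (U $$ (j,l)) * U $$ (j,k)))"
        by (subst sum.swap) (simp add: sum_distrib_left)
      also have "\<dots> = (\<Sum>l<n. if l = k then U $$ (i,k) else 0)"
      proof (rule sum.cong[OF refl])
        fix l assume "l \<in> {..<n}"
        then have l: "l < n" by simp
        show "U $$ (i,l) * D $$ (l,l) * c * (\<Sum>j<n. cnj (U $$ (j,l)) * U $$ (j,k)) = (if l = k then U $$ (i,k) else 0)"
          unfolding orth[OF l kn] using cdk by (simp add: ac_simps)
      qed
      also have "\<dots> = x $ i" using kn i xk dU by simp
      finally show "(\<rho> *\<^sub>v w) $ i = x $ i" .
    qed
    then show "x \<in> span (set (cols \<rho>))" using mult_in_span[OF rc wc] by simp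
  qed
  have "span (set (cols \<rho>)) = span B"
  proof
    show "span (set (cols \<rho>)) \<subseteq> span B" by (rule span_is_subset[OF sub1 span_is_submodule[OF Bc]])
    show "span B \<subseteq> span (set (cols \<rho>))" by (rule span_is_subset[OF sub2 span_is_submodule[OF colsc]])
  qed
  then have "mat_rank n \<rho> = vectorspace.dim class_ring (span_vs B)"
    unfolding mat_rank_def rank_def by simp
  then show ?thesis using dimB cardB unfolding S_def by simp
qed

lemma hist_op_carrier:
  assumes "\<forall>Ps\<in>set \<sigma>. \<forall>P\<in>set Ps. P \<in> carrier_mat n n"
    and "length \<alpha> = length \<sigma>" and "\<forall>j<length \<sigma>. \<alpha> ! j < length (\<sigma> ! j)"
  shows "history_op n \<sigma> \<alpha> \<in> carrier_mat n n"
  using assms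
proof (induction \<sigma> arbitrary: \<alpha>)
  case Nil
  then show ?case by (simp add: history_op_def)
next
  case (Cons Ps \<sigma>)
  then obtain a \<alpha>' where al: "\<alpha> = a # \<alpha>'" by (cases \<alpha>) auto
  have a: "a < length Ps" using Cons.prems(3) al by force
  have rest: "\<forall>j<length \<sigma>. \<alpha>' ! j < length (\<sigma> ! j)"
    using Cons.prems(3) al by force
  have IH: "history_op n \<sigma> \<alpha>' \<in> carrier_mat n n"
    using Cons.IH[of \<alpha>'] Cons.prems(1,2) rest al by simp
  have P: "Ps ! a \<in> carrier_mat n n" using Cons.prems(1) a by simp
  have "history_op n (Ps # \<sigma>) \<alpha> = Ps ! a * history_op n \<sigma> \<alpha>'"
    unfolding al history_op_def by simp
  then show ?case using mult_carrier_mat[OF P IH] by simp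
qed

lemma coh_formula:
  assumes U: "U \<in> carrier_mat n n" and D: "D \<in> carrier_mat n n" and dD: "diagonal_mat D"
    and C1: "C1 \<in> carrier_mat n n" and C2: "C2 \<in> carrier_mat n n"
  shows "mtrace (mat_adjoint C1 * (U * D * mat_adjoint U) * C2) =
    (\<Sum>k<n. \<Sum>j<n. cnj ((mat_adjoint U * C1) $$ (k,j)) * D $$ (k,k) * (mat_adjoint U * C2) $$ (k,j))"
proof -
  have aU: "mat_adjoint U \<in> carrier_mat n n" using U by simp
  have aC1: "mat_adjoint C1 \<in> carrier_mat n n" using C1 by simp
  define X1 where "X1 = mat_adjoint U * C1"
  define X2 where "X2 = mat_adjoint U * C2"
  have X1: "X1 \<in> carrier_mat n n" unfolding X1_def using aU C1 by (rule mult_carrier_mat)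
  have X2: "X2 \<in> carrier_mat n n" unfolding X2_def using aU C2 by (rule mult_carrier_mat)
  have aX1: "mat_adjoint X1 = mat_adjoint C1 * U" unfolding X1_def adj_mult[OF aU C1] by simp
  have UD: "U * D \<in> carrier_mat n n" using U D by (rule mult_carrier_mat)
  have c1: "mat_adjoint C1 * U \<in> carrier_mat n n" using aC1 U by (rule mult_carrier_mat)
  have c2: "mat_adjoint C1 * U * D \<in> carrier_mat n n" using c1 D by (rule mult_carrier_mat)
  have c3: "mat_adjoint C1 * (U * D) \<in> carrier_mat n n" using aC1 UD by (rule mult_carrier_mat)
  have eq: "mat_adjoint C1 * (U * D * mat_adjoint U) * C2 = mat_adjoint X1 * D * X2"
  proof -
    have "mat_adjoint C1 * (U * D * mat_adjoint U) = mat_adjoint C1 * (U * D) * mat_adjoint U"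
      by (rule mult3[OF aC1 UD aU, symmetric])
    also have "mat_adjoint C1 * (U * D) = mat_adjoint C1 * U * D"
      by (rule mult3[OF aC1 U D, symmetric])
    finally have "mat_adjoint C1 * (U * D * mat_adjoint U) * C2 = mat_adjoint C1 * U * D * mat_adjoint U * C2"
      by simp
    also have "\<dots> = mat_adjoint C1 * U * D * (mat_adjoint U * C2)"
      by (rule mult3[OF c2 aU C2])
    finally show ?thesis unfolding aX1 X2_def .
  qed
  have aX1c: "mat_adjoint X1 \<in> carrier_mat n n" using X1 by simp
  have XD: "mat_adjoint X1 * D \<in> carrier_mat n n" using aX1c D by (rule mult_carrier_mat)
  have dX: "dim_row X1 = n" "dim_col X1 = n" "dim_row X2 = n" "dim_col X2 = n" using X1 X2 by auto
  have dD2: "dim_row D = n" "dim_col D = n" using D by auto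
  have "mtrace (mat_adjoint X1 * D * X2) = (\<Sum>j<n. \<Sum>k<n. (mat_adjoint X1 * D) $$ (j,k) * X2 $$ (k,j))"
    by (rule mtrace_mult[OF XD X2])
  also have "\<dots> = (\<Sum>j<n. \<Sum>k<n. cnj (X1 $$ (k,j)) * D $$ (k,k) * X2 $$ (k,j))"
    by (intro sum.cong refl) (simp add: diag_right[OF aX1c D dD] dX)
  also have "\<dots> = (\<Sum>k<n. \<Sum>j<n. cnj (X1 $$ (k,j)) * D $$ (k,k) * X2 $$ (k,j))"
    by (rule sum.swap)
  finally show ?thesis unfolding eq X1_def X2_def .
qed

lemma sum_div_mod:
  fixes f :: "nat \<Rightarrow> nat \<Rightarrow> complex"
  shows "(\<Sum>t<r * n. f (t div n) (t mod n)) = (\<Sum>i<r. \<Sum>j<n. f i j)"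
proof (cases "n = 0")
  case True then show ?thesis by simp
next
  case False
  have bij: "bij_betw (\<lambda>t. (t div n, t mod n)) {..<r * n} ({..<r} \<times> {..<n})"
  proof (rule bij_betwI[where g = "\<lambda>(i,j). i * n + j"])
    show "(\<lambda>t. (t div n, t mod n)) \<in> {..<r * n} \<rightarrow> {..<r} \<times> {..<n}"
      using False by (auto simp: less_mult_imp_div_less)
    show "(\<lambda>(i, j). i * n + j) \<in> {..<r} \<times> {..<n} \<rightarrow> {..<r * n}"
    proof
      fix x assume "x \<in> {..<r} \<times> {..<n}"
      then obtain i j where x: "x = (i,j)" "i < r" "j < n" by auto
      have "i * n + j < i * n + n" using x by simp
      also have "\<dots> = Suc i * n" by simp
      also have "\<dots> \<le> r * n" using x by (intro mult_right_mono) auto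
      finally show "(\<lambda>(i, j). i * n + j) x \<in> {..<r * n}" using x by simp
    qed
    show "(case (t div n, t mod n) of (i, j) \<Rightarrow> i * n + j) = t" for t by simp
    show "((\<lambda>(i, j). i * n + j) y div n, (\<lambda>(i, j). i * n + j) y mod n) = y" if "y \<in> {..<r} \<times> {..<n}" for y :: "nat \<times> nat"
      using that False by auto
  qed
  have "(\<Sum>t<r * n. f (t div n) (t mod n)) = (\<Sum>p\<in>{..<r} \<times> {..<n}. f (fst p) (snd p))"
    using sum.reindex_bij_betw[OF bij, of "\<lambda>p. f (fst p) (snd p)"] by simp
  also have "\<dots> = (\<Sum>i<r. \<Sum>j<n. f i j)" by (rule sum.cartesian_product[symmetric, unfolded case_prod_beta])
  finally show ?thesis .
qed

lemma family_carrier: "family n \<sigma> \<Longrightarrow> \<forall>Ps\<in>set \<sigma>. \<forall>P\<in>set Ps. P \<in> carrier_mat n n"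
  unfolding family_def exh_excl_def projector_def hermitian_mat_def by blast

lemma part1:
  assumes uU: "unitary n U" and D: "D \<in> carrier_mat n n" and dD: "diagonal_mat D"
    and rho: "\<rho> = U * D * mat_adjoint U" and mc: "medium_consistent n \<rho> \<sigma>"
  shows "card (nonzero_histories n \<rho> \<sigma>) \<le> card {k. k < n \<and> D $$ (k,k) \<noteq> 0} * n"
proof -
  define S where "S = {k. k < n \<and> D $$ (k,k) \<noteq> 0}"
  define r where "r = card S"
  define H where "H = nonzero_histories n \<rho> \<sigma>"
  have U: "U \<in> carrier_mat n n" using uU by (simp add: unitary_def)
  have aU: "mat_adjoint U \<in> carrier_mat n n" using U by simp
  have Sn: "S \<subseteq> {..<n}" unfolding S_def by auto
  have finS: "finite S" using Sn finite_subset by blast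
  obtain g where g: "bij_betw g {..<r} S"
    using ex_bij_betw_nat_finite[OF finS] unfolding r_def lessThan_atLeast0 by blast
  have gS: "i < r \<Longrightarrow> g i \<in> S" for i using g by (auto simp: bij_betw_def)
  have gn: "i < r \<Longrightarrow> g i < n" for i using gS Sn by auto
  have fam: "family n \<sigma>" and coh: "\<And>\<alpha> \<beta>. \<alpha> \<in> histories \<sigma> \<Longrightarrow> \<beta> \<in> histories \<sigma> \<Longrightarrow>
      coherence n \<rho> \<sigma> \<alpha> \<beta> = (if \<alpha> = \<beta> then hist_prob n \<rho> \<sigma> \<alpha> else 0)"
    using mc unfolding medium_consistent_def by auto
  have Cc: "history_op n \<sigma> \<alpha> \<in> carrier_mat n n" if "\<alpha> \<in> histories \<sigma>" for \<alpha>
    using hist_op_carrier[OF family_carrier[OF fam]] that unfolding histories_def by blast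
  define X where "X \<alpha> = mat_adjoint U * history_op n \<sigma> \<alpha>" for \<alpha>
  have Xc: "X \<alpha> \<in> carrier_mat n n" if "\<alpha> \<in> histories \<sigma>" for \<alpha>
    unfolding X_def using aU Cc[OF that] by (rule mult_carrier_mat)
  have cohX: "coherence n \<rho> \<sigma> \<beta> \<alpha> = (\<Sum>k<n. \<Sum>j<n. cnj (X \<beta> $$ (k,j)) * D $$ (k,k) * X \<alpha> $$ (k,j))"
    if "\<alpha> \<in> histories \<sigma>" "\<beta> \<in> histories \<sigma>" for \<alpha> \<beta>
    unfolding coherence_def rho X_def by (rule coh_formula[OF U D dD Cc[OF that(2)] Cc[OF that(1)]])
  define vv where "vv \<alpha> = vec (r * n) (\<lambda>t. D $$ (g (t div n), g (t div n)) * X \<alpha> $$ (g (t div n), t mod n))" for \<alpha>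
  define ww where "ww \<alpha> = vec (r * n) (\<lambda>t. X \<alpha> $$ (g (t div n), t mod n))" for \<alpha>
  have key: "(\<Sum>t<r * n. cnj (ww \<beta> $ t) * vv \<alpha> $ t) = coherence n \<rho> \<sigma> \<beta> \<alpha>"
    if a: "\<alpha> \<in> histories \<sigma>" and b: "\<beta> \<in> histories \<sigma>" for \<alpha> \<beta>
  proof -
    define F where "F k j = cnj (X \<beta> $$ (k,j)) * D $$ (k,k) * X \<alpha> $$ (k,j)" for k j
    have "(\<Sum>t<r * n. cnj (ww \<beta> $ t) * vv \<alpha> $ t) = (\<Sum>t<r * n. (\<lambda>i j. F (g i) j) (t div n) (t mod n))"
      by (rule sum.cong) (auto simp: ww_def vv_def F_def ac_simps)
    also have "\<dots> = (\<Sum>i<r. \<Sum>j<n. F (g i) j)" by (rule sum_div_mod)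
    also have "\<dots> = (\<Sum>k\<in>S. \<Sum>j<n. F k j)"
      by (rule sum.reindex_bij_betw[OF g, of "\<lambda>k. \<Sum>j<n. F k j"])
    also have "\<dots> = (\<Sum>k<n. \<Sum>j<n. F k j)"
      by (rule sum.mono_neutral_left) (use Sn in \<open>auto simp: S_def F_def\<close>)
    also have "\<dots> = coherence n \<rho> \<sigma> \<beta> \<alpha>" unfolding cohX[OF a b] F_def ..
    finally show ?thesis .
  qed
  have Hh: "H \<subseteq> histories \<sigma>" unfolding H_def nonzero_histories_def by auto
  have Hp: "hist_prob n \<rho> \<sigma> \<beta> \<noteq> 0" if "\<beta> \<in> H" for \<beta>
    using that unfolding H_def nonzero_histories_def by auto
  have hp: "hist_prob n \<rho> \<sigma> \<beta> = coherence n \<rho> \<sigma> \<beta> \<beta>" for \<beta>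
    unfolding hist_prob_def coherence_def ..
  have pair: "(\<Sum>t<r * n. cnj (ww \<beta> $ t) * vv \<alpha> $ t) = (if \<beta> = \<alpha> then hist_prob n \<rho> \<sigma> \<beta> else 0)"
    if "\<alpha> \<in> H" "\<beta> \<in> H" for \<alpha> \<beta>
  proof -
    have a: "\<alpha> \<in> histories \<sigma>" and b: "\<beta> \<in> histories \<sigma>" using that Hh by auto
    show ?thesis unfolding key[OF a b] coh[OF b a] hp by simp
  qed
  have inj: "inj_on vv H"
  proof (rule inj_onI)
    fix \<alpha> \<beta> assume a: "\<alpha> \<in> H" and b: "\<beta> \<in> H" and eq: "vv \<alpha> = vv \<beta>"
    show "\<alpha> = \<beta>"
    proof (rule ccontr)
      assume ne: "\<alpha> \<noteq> \<beta>"
      have "(\<Sum>t<r * n. cnj (ww \<beta> $ t) * vv \<alpha> $ t) = 0" using pair[OF a b] ne by simp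
      moreover have "(\<Sum>t<r * n. cnj (ww \<beta> $ t) * vv \<alpha> $ t) = hist_prob n \<rho> \<sigma> \<beta>"
        unfolding eq using pair[OF b b] by simp
      ultimately show False using Hp[OF b] by simp
    qed
  qed
  interpret vec_space "TYPE(complex)" "r * n" .
  have Vc: "vv ` H \<subseteq> carrier_vec (r * n)" unfolding vv_def by auto
  have indep: "lin_indpt (vv ` H)"
  proof
    assume ld: "lin_dep (vv ` H)"
    have "\<exists>A a v. finite A \<and> A \<subseteq> vv ` H \<and> lincomb a A = 0\<^sub>v (r * n) \<and> v \<in> A \<and> a v \<noteq> 0"
      using ld unfolding lin_dep_def by (auto simp: class_ring_simps module_vec_simps)
    then obtain A a v where A: "finite A" "A \<subseteq> vv ` H" and lc: "lincomb a A = 0\<^sub>v (r * n)"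
      and vA: "v \<in> A" and av: "a v \<noteq> 0" by blast
    from vA A obtain \<beta> where b: "\<beta> \<in> H" and vb: "v = vv \<beta>" by auto
    have Ac: "A \<subseteq> carrier_vec (r * n)" using A Vc by auto
    have "(\<Sum>t<r * n. cnj (ww \<beta> $ t) * lincomb a A $ t) = 0"
      unfolding lc by simp
    moreover have "(\<Sum>t<r * n. cnj (ww \<beta> $ t) * lincomb a A $ t)
        = (\<Sum>t<r * n. \<Sum>x\<in>A. cnj (ww \<beta> $ t) * (a x * x $ t))"
      by (rule sum.cong) (auto simp: lincomb_index[OF _ Ac] sum_distrib_left)
    moreover have "\<dots> = (\<Sum>x\<in>A. a x * (\<Sum>t<r * n. cnj (ww \<beta> $ t) * x $ t))"
      by (subst sum.swap) (auto simp: sum_distrib_left ac_simps intro!: sum.cong)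
    moreover have "\<dots> = (\<Sum>x\<in>A. if x = v then a x * hist_prob n \<rho> \<sigma> \<beta> else 0)"
    proof (rule sum.cong)
      fix x assume xA: "x \<in> A"
      then obtain \<alpha> where a: "\<alpha> \<in> H" and xa: "x = vv \<alpha>" using A by auto
      show "a x * (\<Sum>t<r * n. cnj (ww \<beta> $ t) * x $ t) = (if x = v then a x * hist_prob n \<rho> \<sigma> \<beta> else 0)"
        using pair[OF a b] pair[OF b b] xa vb by (cases "\<beta> = \<alpha>") auto
    qed simp
    moreover have "\<dots> = a v * hist_prob n \<rho> \<sigma> \<beta>" using vA A(1) by simp
    ultimately have "a v * hist_prob n \<rho> \<sigma> \<beta> = 0" by simp
    then show False using av Hp[OF b] by simp
  qed
  have "card (vv ` H) \<le> r * n"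
    using li_le_dim(2)[OF fin_dim Vc indep] dim_is_n by simp
  then show ?thesis using card_image[OF inj] unfolding H_def r_def S_def by simp
qed

definition prj :: "nat \<Rightarrow> complex mat \<Rightarrow> nat \<Rightarrow> complex mat" where
  "prj n W i = mat n n (\<lambda>(a,b). W $$ (a,i) * cnj (W $$ (b,i)))"

lemma prj_carrier[simp]: "prj n W i \<in> carrier_mat n n"
  unfolding prj_def by simp

lemma prj_index: "a < n \<Longrightarrow> b < n \<Longrightarrow> prj n W i $$ (a,b) = W $$ (a,i) * cnj (W $$ (b,i))"
  unfolding prj_def by simp

lemma prj_dims[simp]: "dim_row (prj n W i) = n" "dim_col (prj n W i) = n"
  unfolding prj_def by simp_all

lemma prj_mult: assumes u: "unitary n W" and a: "a < n" and b: "b < n"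
  shows "prj n W a * prj n W b = (if a = b then prj n W a else 0\<^sub>m n n)"
proof (rule eq_matI)
  fix x y assume "x < dim_row (if a = b then prj n W a else 0\<^sub>m n n)" "y < dim_col (if a = b then prj n W a else 0\<^sub>m n n)"
  then have x: "x < n" and y: "y < n" by (auto split: if_splits)
  have "(prj n W a * prj n W b) $$ (x,y) = (\<Sum>k<n. prj n W a $$ (x,k) * prj n W b $$ (k,y))"
    using x y by (simp add: scalar_prod_def atLeast0LessThan)
  also have "\<dots> = (\<Sum>k<n. W $$ (x,a) * cnj (W $$ (y,b)) * (cnj (W $$ (k,a)) * W $$ (k,b)))"
    by (rule sum.cong) (auto simp: prj_index x y ac_simps)
  also have "\<dots> = W $$ (x,a) * cnj (W $$ (y,b)) * (\<Sum>k<n. cnj (W $$ (k,a)) * W $$ (k,b))"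
    by (simp add: sum_distrib_left)
  also have "\<dots> = (if a = b then prj n W a else 0\<^sub>m n n) $$ (x,y)"
    unfolding unitary_orth[OF u a b] using x y by (simp add: prj_index)
  finally show "(prj n W a * prj n W b) $$ (x,y) = (if a = b then prj n W a else 0\<^sub>m n n) $$ (x,y)" .
qed auto

lemma prj_herm: "mat_adjoint (prj n W i) = prj n W i"
  by (rule eq_matI) (auto simp: prj_index)

lemma foldr_add_entry:
  assumes "\<forall>M\<in>set xs. M \<in> carrier_mat n n"
  shows "foldr (+) xs (0\<^sub>m n n) \<in> carrier_mat n n \<and>
    (\<forall>a<n. \<forall>b<n. foldr (+) xs (0\<^sub>m n n) $$ (a,b) = sum_list (map (\<lambda>M. M $$ (a,b)) xs))"
  using assms
proof (induction xs)
  case Nil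
  then show ?case by simp
next
  case (Cons M xs)
  then have M: "M \<in> carrier_mat n n" and IH: "foldr (+) xs (0\<^sub>m n n) \<in> carrier_mat n n"
    "\<forall>a<n. \<forall>b<n. foldr (+) xs (0\<^sub>m n n) $$ (a,b) = sum_list (map (\<lambda>M. M $$ (a,b)) xs)" by auto
  have c: "M + foldr (+) xs (0\<^sub>m n n) \<in> carrier_mat n n" using IH(1) by (rule add_carrier_mat)
  show ?case using c IH M by auto
qed

lemma prj_exh: assumes u: "unitary n W" shows "exh_excl n (map (prj n W) [0..<n])"
proof -
  have W: "W \<in> carrier_mat n n" and W2: "W * mat_adjoint W = 1\<^sub>m n" using u by (auto simp: unitary_def)
  have dW: "dim_row W = n" "dim_col W = n" using W by auto
  have proj: "projector n P" if Pin: "P \<in> set (map (prj n W) [0..<n])" for P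
  proof -
    obtain i where i: "i < n" and P: "P = prj n W i" using Pin by auto
    show ?thesis unfolding projector_def hermitian_mat_def P
      using prj_herm prj_mult[OF u i i] by simp
  qed
  have fc: "\<forall>M\<in>set (map (prj n W) [0..<n]). M \<in> carrier_mat n n" by auto
  note fe = foldr_add_entry[OF fc]
  have sum1: "foldr (+) (map (prj n W) [0..<n]) (0\<^sub>m n n) = 1\<^sub>m n"
  proof (rule eq_matI)
    fix a b assume "a < dim_row (1\<^sub>m n)" "b < dim_col (1\<^sub>m n)"
    then have a: "a < n" and b: "b < n" by auto
    have "foldr (+) (map (prj n W) [0..<n]) (0\<^sub>m n n) $$ (a,b) = sum_list (map (\<lambda>i. prj n W i $$ (a,b)) [0..<n])"
      using fe a b by (simp add: comp_def)
    also have "\<dots> = (\<Sum>i<n. W $$ (a,i) * cnj (W $$ (b,i)))"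
      unfolding interv_sum_list_conv_sum_set_nat by (auto simp: prj_index a b atLeast0LessThan intro!: sum.cong)
    also have "\<dots> = (W * mat_adjoint W) $$ (a,b)"
      using a b dW by (simp add: scalar_prod_def atLeast0LessThan)
    also have "\<dots> = 1\<^sub>m n $$ (a,b)" unfolding W2 ..
    finally show "foldr (+) (map (prj n W) [0..<n]) (0\<^sub>m n n) $$ (a,b) = 1\<^sub>m n $$ (a,b)" .
  qed (use fe in auto)
  have orth: "\<forall>a < length (map (prj n W) [0..<n]). \<forall>b < length (map (prj n W) [0..<n]).
     map (prj n W) [0..<n] ! a * map (prj n W) [0..<n] ! b =
     (if a = b then map (prj n W) [0..<n] ! a else 0\<^sub>m n n)"
    using prj_mult[OF u] by simp
  show ?thesis unfolding exh_excl_def using proj sum1 orth by blast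
qed

lemma one_exh: "exh_excl n [1\<^sub>m n]"
  unfolding exh_excl_def projector_def hermitian_mat_def by simp

lemma exists_F: assumes n: "n > 0"
  shows "\<exists>F. unitary n F \<and> (\<forall>a<n. \<forall>b<n. F $$ (a,b) \<noteq> 0)"
proof -
  define x where "x = 1 / real n"
  have x0: "x \<noteq> 0" unfolding x_def using n by simp
  have nx: "real n * x = 1" unfolding x_def using n by simp
  define c where "c = Complex x x"
  define F where "F = mat n n (\<lambda>(a,b). (if a = b then 1 else 0) - c)"
  have Fc: "F \<in> carrier_mat n n" unfolding F_def by simp
  have aF: "mat_adjoint F \<in> carrier_mat n n" using Fc by simp
  have ar: "of_nat n * (c * cnj c) - cnj c - c = 0"
  proof -
    have "of_nat n * (c * cnj c) - cnj c - c = Complex (real n * (x * x + x * x) - 2 * x) 0"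
      unfolding c_def by (simp add: complex_eq_iff)
    also have "real n * (x * x + x * x) - 2 * x = 2 * x * (real n * x) - 2 * x" by (simp add: algebra_simps)
    also have "\<dots> = 0" using nx by simp
    finally show ?thesis by (simp add: complex_eq_iff)
  qed
  have 1: "F * mat_adjoint F = 1\<^sub>m n"
  proof (rule eq_matI)
    fix a b assume "a < dim_row (1\<^sub>m n)" "b < dim_col (1\<^sub>m n)"
    then have a: "a < n" and b: "b < n" by auto
    have "(F * mat_adjoint F) $$ (a,b) = (\<Sum>k<n. F $$ (a,k) * cnj (F $$ (b,k)))"
      using a b Fc by (simp add: scalar_prod_def atLeast0LessThan)
    also have "\<dots> = (\<Sum>k<n. ((if a = k then 1 else 0) * (if b = k then 1 else 0)
         - (if a = k then cnj c else 0) - (if b = k then c else 0) + c * cnj c))"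
      by (rule sum.cong) (auto simp: F_def a b algebra_simps)
    also have "\<dots> = (\<Sum>k<n. (if a = k then 1 else 0) * (if b = k then 1 else 0))
         - (\<Sum>k<n. (if a = k then cnj c else 0)) - (\<Sum>k<n. (if b = k then c else 0)) + (\<Sum>k<n. c * cnj c)"
      by (simp add: sum.distrib sum_subtractf)
    also have "\<dots> = (if a = b then 1 else 0) - cnj c - c + of_nat n * (c * cnj c)"
      using a b by (simp add: if_distrib[of "\<lambda>x. x * _"] cong: if_cong)
    also have "\<dots> = 1\<^sub>m n $$ (a,b)" using ar a b by (simp add: algebra_simps)
    finally show "(F * mat_adjoint F) $$ (a,b) = 1\<^sub>m n $$ (a,b)" .
  qed (use Fc in auto)
  have 2: "mat_adjoint F * F = 1\<^sub>m n" by (rule mat_mult_left_right_inverse[OF Fc aF 1])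
  have nz: "F $$ (a,b) \<noteq> 0" if "a < n" "b < n" for a b
  proof -
    have "Im (F $$ (a,b)) = - x" using that unfolding F_def c_def by simp
    then show ?thesis using x0 by auto
  qed
  show ?thesis using Fc 1 2 nz by (auto simp: unitary_def)
qed

lemma prj_prod_entry: assumes x: "x < n" and y: "y < n"
  shows "(prj n U i * prj n V j) $$ (x,y) = U $$ (x,i) * cnj (V $$ (y,j)) * (\<Sum>k<n. cnj (U $$ (k,i)) * V $$ (k,j))"
proof -
  have "(prj n U i * prj n V j) $$ (x,y) = (\<Sum>k<n. prj n U i $$ (x,k) * prj n V j $$ (k,y))"
    using x y by (simp add: scalar_prod_def atLeast0LessThan)
  also have "\<dots> = (\<Sum>k<n. U $$ (x,i) * cnj (V $$ (y,j)) * (cnj (U $$ (k,i)) * V $$ (k,j)))"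
    by (rule sum.cong) (auto simp: prj_index x y ac_simps)
  finally show ?thesis by (simp add: sum_distrib_left)
qed

lemma X_entry: assumes uU: "unitary n U" and i: "i < n" and k: "k < n" and y: "y < n"
  shows "(mat_adjoint U * (prj n U i * prj n V j)) $$ (k,y) =
     (if k = i then cnj (V $$ (y,j)) * (\<Sum>l<n. cnj (U $$ (l,i)) * V $$ (l,j)) else 0)"
proof -
  have U: "U \<in> carrier_mat n n" using uU by (simp add: unitary_def)
  have dU: "dim_row U = n" "dim_col U = n" using U by auto
  define G where "G = (\<Sum>l<n. cnj (U $$ (l,i)) * V $$ (l,j))"
  have "(mat_adjoint U * (prj n U i * prj n V j)) $$ (k,y) = (\<Sum>x<n. cnj (U $$ (x,k)) * (prj n U i * prj n V j) $$ (x,y))"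
    using k y dU by (simp add: scalar_prod_def atLeast0LessThan)
  also have "\<dots> = (\<Sum>x<n. cnj (V $$ (y,j)) * G * (cnj (U $$ (x,k)) * U $$ (x,i)))"
  proof (rule sum.cong[OF refl])
    fix x assume "x \<in> {..<n}"
    then have x: "x < n" by simp
    show "cnj (U $$ (x,k)) * (prj n U i * prj n V j) $$ (x,y) = cnj (V $$ (y,j)) * G * (cnj (U $$ (x,k)) * U $$ (x,i))"
      unfolding prj_prod_entry[OF x y] G_def by (simp add: ac_simps)
  qed
  also have "\<dots> = cnj (V $$ (y,j)) * G * (\<Sum>x<n. cnj (U $$ (x,k)) * U $$ (x,i))"
    by (simp add: sum_distrib_left)
  also have "\<dots> = (if k = i then cnj (V $$ (y,j)) * G else 0)"
    unfolding unitary_orth[OF uU k i] by simp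
  finally show ?thesis unfolding G_def .
qed

lemma coh_pair:
  assumes uU: "unitary n U" and uV: "unitary n V" and D: "D \<in> carrier_mat n n" and dD: "diagonal_mat D"
    and i: "i < n" and j: "j < n" and i': "i' < n" and j': "j' < n"
  shows "mtrace (mat_adjoint (prj n U i * prj n V j) * (U * D * mat_adjoint U) * (prj n U i' * prj n V j'))
    = (if i = i' \<and> j = j' then D $$ (i,i) * cnj (\<Sum>l<n. cnj (U $$ (l,i)) * V $$ (l,j)) * (\<Sum>l<n. cnj (U $$ (l,i)) * V $$ (l,j)) else 0)"
proof -
  have U: "U \<in> carrier_mat n n" using uU by (simp add: unitary_def)
  define G where "G i j = (\<Sum>l<n. cnj (U $$ (l,i)) * V $$ (l,j))" for i j
  have C: "prj n U a * prj n V b \<in> carrier_mat n n" for a b by (rule mult_carrier_mat) auto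
  have Vo: "(\<Sum>y<n. V $$ (y,j) * cnj (V $$ (y,j'))) = (if j = j' then 1 else 0)"
    using unitary_orth[OF uV j' j] by (simp add: ac_simps)
  have inner: "(\<Sum>y<n. cnj ((mat_adjoint U * (prj n U i * prj n V j)) $$ (k,y)) * D $$ (k,k)
        * (mat_adjoint U * (prj n U i' * prj n V j')) $$ (k,y))
      = (if k = i \<and> k = i' then D $$ (k,k) * cnj (G i j) * G i' j' * (if j = j' then 1 else 0) else 0)"
    if k: "k < n" for k
  proof -
    have "(\<Sum>y<n. cnj ((mat_adjoint U * (prj n U i * prj n V j)) $$ (k,y)) * D $$ (k,k)
        * (mat_adjoint U * (prj n U i' * prj n V j')) $$ (k,y))
      = (\<Sum>y<n. (if k = i \<and> k = i' then D $$ (k,k) * cnj (G i j) * G i' j' * (V $$ (y,j) * cnj (V $$ (y,j'))) else 0))"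
      by (rule sum.cong) (auto simp: X_entry[OF uU i k] X_entry[OF uU i' k] G_def ac_simps)
    also have "\<dots> = (if k = i \<and> k = i' then D $$ (k,k) * cnj (G i j) * G i' j' * (\<Sum>y<n. V $$ (y,j) * cnj (V $$ (y,j'))) else 0)"
      by (cases "k = i"; cases "k = i'") (simp_all add: sum_distrib_left)
    finally show ?thesis unfolding Vo .
  qed
  have "mtrace (mat_adjoint (prj n U i * prj n V j) * (U * D * mat_adjoint U) * (prj n U i' * prj n V j'))
     = (\<Sum>k<n. (if k = i \<and> k = i' then D $$ (k,k) * cnj (G i j) * G i' j' * (if j = j' then 1 else 0) else 0))"
    unfolding coh_formula[OF U D dD C C] by (rule sum.cong) (simp_all add: inner)
  also have "\<dots> = (if i = i' \<and> j = j' then D $$ (i,i) * cnj (G i j) * G i j else 0)"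
    using i by (auto simp: sum.If_cases)
  finally show ?thesis unfolding G_def .
qed

definition hh :: "nat \<Rightarrow> nat \<Rightarrow> nat \<Rightarrow> nat list" where
  "hh m i j = [i, j] @ replicate m 0"

definition fam :: "nat \<Rightarrow> complex mat \<Rightarrow> complex mat \<Rightarrow> nat \<Rightarrow> complex mat list list" where
  "fam n U V m = [map (prj n U) [0..<n], map (prj n V) [0..<n]] @ replicate m [1\<^sub>m n]"

lemma fam_length[simp]: "length (fam n U V m) = Suc (Suc m)"
  unfolding fam_def by simp

lemma fam_nth: "fam n U V m ! 0 = map (prj n U) [0..<n]" "fam n U V m ! 1 = map (prj n V) [0..<n]" "fam n U V m ! Suc 0 = map (prj n V) [0..<n]"
  "k \<ge> 2 \<Longrightarrow> k < Suc (Suc m) \<Longrightarrow> fam n U V m ! k = [1\<^sub>m n]"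
  unfolding fam_def by (auto simp: nth_append)

lemma hh_inj: "hh m i j = hh m i' j' \<longleftrightarrow> i = i' \<and> j = j'"
  unfolding hh_def by simp

lemma histories_fam: "histories (fam n U V m) = (\<lambda>(i,j). hh m i j) ` ({..<n} \<times> {..<n})"
proof
  show "(\<lambda>(i,j). hh m i j) ` ({..<n} \<times> {..<n}) \<subseteq> histories (fam n U V m)"
  proof
    fix x assume "x \<in> (\<lambda>(i,j). hh m i j) ` ({..<n} \<times> {..<n})"
    then obtain i j where x: "x = hh m i j" and i: "i < n" and j: "j < n" by auto
    have "x ! k < length (fam n U V m ! k)" if k: "k < Suc (Suc m)" for k
    proof -
      consider "k = 0" | "k = 1" | "k \<ge> 2" by linarith
      then show ?thesis
      proof cases
        case 1 then show ?thesis using i by (simp add: x hh_def fam_nth)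
      next
        case 2 then show ?thesis using j by (simp add: x hh_def fam_nth)
      next
        case 3
        have "x ! k = 0" using 3 k unfolding x hh_def by (simp add: nth_append)
        then show ?thesis using 3 k by (simp add: fam_nth)
      qed
    qed
    then show "x \<in> histories (fam n U V m)" unfolding histories_def by (simp add: x hh_def)
  qed
  show "histories (fam n U V m) \<subseteq> (\<lambda>(i,j). hh m i j) ` ({..<n} \<times> {..<n})"
  proof
    fix x assume "x \<in> histories (fam n U V m)"
    then have len: "length x = Suc (Suc m)" and lt: "\<And>k. k < Suc (Suc m) \<Longrightarrow> x ! k < length (fam n U V m ! k)"
      unfolding histories_def by auto
    have i: "x ! 0 < n" using lt[of 0] by (simp add: fam_nth)
    have j: "x ! 1 < n" using lt[of 1] by (simp add: fam_nth)
    have "x = hh m (x ! 0) (x ! 1)"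
    proof (rule nth_equalityI)
      show "length x = length (hh m (x ! 0) (x ! 1))" using len by (simp add: hh_def)
      fix k assume k: "k < length x"
      consider "k = 0" | "k = 1" | "k \<ge> 2" by linarith
      then show "x ! k = hh m (x ! 0) (x ! 1) ! k"
      proof cases
        case 3
        have "x ! k < 1" using lt[of k] k len 3 by (simp add: fam_nth)
        then show ?thesis using 3 k len by (simp add: hh_def nth_append)
      qed (simp_all add: hh_def)
    qed
    then show "x \<in> (\<lambda>(i,j). hh m i j) ` ({..<n} \<times> {..<n})" using i j by force
  qed
qed

lemma foldr_ones: "foldr (\<lambda>(Ps, a) acc. Ps ! a * acc) (zip (replicate m [1\<^sub>m n]) (replicate m 0)) (1\<^sub>m n) = (1\<^sub>m n :: complex mat)"
  by (induction m) simp_all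

lemma funpow_ones: "(((*) (1\<^sub>m n)) ^^ m) (1\<^sub>m n) = (1\<^sub>m n :: complex mat)"
  by (induction m) simp_all

lemma hist_op_fam: assumes i: "i < n" and j: "j < n"
  shows "history_op n (fam n U V m) (hh m i j) = prj n U i * prj n V j"
proof -
  have "history_op n (fam n U V m) (hh m i j) = prj n U i * (prj n V j * 1\<^sub>m n)"
    unfolding history_op_def fam_def hh_def using i j by (simp add: foldr_ones funpow_ones)
  also have "prj n V j * 1\<^sub>m n = prj n V j" by (rule right_mult_one_mat[OF prj_carrier])
  finally show ?thesis .
qed

lemma family_fam: assumes "unitary n U" "unitary n V" shows "family n (fam n U V m)"
  unfolding family_def fam_def using prj_exh[OF assms(1)] prj_exh[OF assms(2)] one_exh by auto

lemma part2:
  assumes uU: "unitary n U" and D: "D \<in> carrier_mat n n" and dD: "diagonal_mat D"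
    and rho: "\<rho> = U * D * mat_adjoint U" and n: "n > 0"
  shows "infinite {\<sigma>. medium_consistent n \<rho> \<sigma> \<and>
     card (nonzero_histories n \<rho> \<sigma>) = card {k. k < n \<and> D $$ (k,k) \<noteq> 0} * n}"
proof -
  define S where "S = {k. k < n \<and> D $$ (k,k) \<noteq> 0}"
  obtain F where uF: "unitary n F" and Fnz: "\<And>a b. a < n \<Longrightarrow> b < n \<Longrightarrow> F $$ (a,b) \<noteq> 0"
    using exists_F[OF n] by blast
  define V where "V = U * F"
  have uV: "unitary n V" unfolding V_def by (rule unitary_mult[OF uU uF])
  have U: "U \<in> carrier_mat n n" and U1: "mat_adjoint U * U = 1\<^sub>m n" using uU by (auto simp: unitary_def)
  have F: "F \<in> carrier_mat n n" using uF by (simp add: unitary_def)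
  have aU: "mat_adjoint U \<in> carrier_mat n n" using U by simp
  have dU: "dim_row U = n" "dim_col U = n" using U by auto
  have Vc: "V \<in> carrier_mat n n" using uV by (simp add: unitary_def)
  have dV: "dim_row V = n" "dim_col V = n" using Vc by auto
  define G where "G i j = (\<Sum>l<n. cnj (U $$ (l,i)) * V $$ (l,j))" for i j
  have GF: "G i j = F $$ (i,j)" if "i < n" "j < n" for i j
  proof -
    have "G i j = (mat_adjoint U * V) $$ (i,j)"
      unfolding G_def using that dU dV by (simp add: scalar_prod_def atLeast0LessThan)
    also have "mat_adjoint U * V = (mat_adjoint U * U) * F" unfolding V_def by (rule mult3[OF aU U F, symmetric])
    also have "\<dots> = F" unfolding U1 by (rule left_mult_one_mat[OF F])
    finally show ?thesis .
  qed
  have Gnz: "cnj (G i j) * G i j \<noteq> 0" if "i < n" "j < n" for i j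
    using Fnz[OF that] GF[OF that] by simp
  have cohf: "coherence n \<rho> (fam n U V m) (hh m i j) (hh m i' j') =
      (if i = i' \<and> j = j' then D $$ (i,i) * cnj (G i j) * G i j else 0)"
    if "i < n" "j < n" "i' < n" "j' < n" for m i j i' j'
    unfolding coherence_def hist_op_fam[OF that(1,2)] hist_op_fam[OF that(3,4)] rho G_def
    by (rule coh_pair[OF uU uV D dD that])
  have good: "medium_consistent n \<rho> (fam n U V m) \<and>
     card (nonzero_histories n \<rho> (fam n U V m)) = card S * n" for m
  proof -
    let ?h = "\<lambda>(i,j). hh m i j"
    have mc: "medium_consistent n \<rho> (fam n U V m)"
      unfolding medium_consistent_def
    proof (intro conjI ballI)
      show "family n (fam n U V m)" by (rule family_fam[OF uU uV])
      fix \<alpha> \<beta> assume a: "\<alpha> \<in> histories (fam n U V m)" and b: "\<beta> \<in> histories (fam n U V m)"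
      from a obtain i j where al: "\<alpha> = hh m i j" and i: "i < n" and j: "j < n"
        unfolding histories_fam by auto
      from b obtain i' j' where be: "\<beta> = hh m i' j'" and i': "i' < n" and j': "j' < n"
        unfolding histories_fam by auto
      show "coherence n \<rho> (fam n U V m) \<alpha> \<beta> = (if \<alpha> = \<beta> then hist_prob n \<rho> (fam n U V m) \<alpha> else 0)"
      proof (cases "\<alpha> = \<beta>")
        case True
        then show ?thesis unfolding hist_prob_def coherence_def by simp
      next
        case False
        then have "\<not> (i = i' \<and> j = j')" using al be by auto
        then show ?thesis using False unfolding al be cohf[OF i j i' j'] by auto
      qed
    qed
    have nz: "nonzero_histories n \<rho> (fam n U V m) = ?h ` (S \<times> {..<n})"
    proof -
      have hp: "hist_prob n \<rho> (fam n U V m) (hh m i j) = D $$ (i,i) * cnj (G i j) * G i j"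
        if "i < n" "j < n" for i j
        using cohf[OF that that] unfolding hist_prob_def coherence_def by simp
      have "nonzero_histories n \<rho> (fam n U V m) = {x \<in> ?h ` ({..<n} \<times> {..<n}). hist_prob n \<rho> (fam n U V m) x \<noteq> 0}"
        unfolding nonzero_histories_def histories_fam ..
      also have "\<dots> = ?h ` (S \<times> {..<n})"
      proof
        show "{x \<in> ?h ` ({..<n} \<times> {..<n}). hist_prob n \<rho> (fam n U V m) x \<noteq> 0} \<subseteq> ?h ` (S \<times> {..<n})"
        proof
          fix x assume "x \<in> {x \<in> ?h ` ({..<n} \<times> {..<n}). hist_prob n \<rho> (fam n U V m) x \<noteq> 0}"
          then obtain i j where x: "x = hh m i j" and i: "i < n" and j: "j < n"
            and p: "hist_prob n \<rho> (fam n U V m) x \<noteq> 0" by auto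
          have "D $$ (i,i) \<noteq> 0" using p unfolding x hp[OF i j] by auto
          then show "x \<in> ?h ` (S \<times> {..<n})" using x i j unfolding S_def by force
        qed
        show "?h ` (S \<times> {..<n}) \<subseteq> {x \<in> ?h ` ({..<n} \<times> {..<n}). hist_prob n \<rho> (fam n U V m) x \<noteq> 0}"
        proof
          fix x assume "x \<in> ?h ` (S \<times> {..<n})"
          then obtain i j where x: "x = hh m i j" and i: "i < n" and j: "j < n" and d: "D $$ (i,i) \<noteq> 0"
            unfolding S_def by auto
          have "hist_prob n \<rho> (fam n U V m) x \<noteq> 0"
            unfolding x hp[OF i j] using d Gnz[OF i j] by simp
          then show "x \<in> {x \<in> ?h ` ({..<n} \<times> {..<n}). hist_prob n \<rho> (fam n U V m) x \<noteq> 0}"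
            using x i j by force
        qed
      qed
      finally show ?thesis .
    qed
    have inj: "inj_on ?h (S \<times> {..<n})" by (auto simp: inj_on_def hh_inj)
    have "card (nonzero_histories n \<rho> (fam n U V m)) = card (S \<times> {..<n})"
      unfolding nz by (rule card_image[OF inj])
    also have "\<dots> = card S * n" by (simp add: card_cartesian_product)
    finally show ?thesis using mc by simp
  qed
  have sub: "range (fam n U V) \<subseteq> {\<sigma>. medium_consistent n \<rho> \<sigma> \<and> card (nonzero_histories n \<rho> \<sigma>) = card S * n}"
    using good by auto
  have inj: "inj (fam n U V)"
  proof (rule injI)
    fix a b assume "fam n U V a = fam n U V b"
    then have "length (fam n U V a) = length (fam n U V b)" by simp
    then show "a = b" by simp
  qed
  have "infinite (range (fam n U V))"
    using finite_imageD[OF _ inj] by auto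
  then show ?thesis using infinite_super[OF sub] unfolding S_def by simp
qed

theorem lemma1:
  fixes \<Omega> :: nat and \<rho> :: "complex mat"
  assumes "density_matrix \<Omega> \<rho>"
  shows "(\<forall>\<sigma>. medium_consistent \<Omega> \<rho> \<sigma> \<longrightarrow>
            card (nonzero_histories \<Omega> \<rho> \<sigma>) \<le> mat_rank \<Omega> \<rho> * \<Omega>)
       \<and> infinite {\<sigma>. medium_consistent \<Omega> \<rho> \<sigma> \<and>
            card (nonzero_histories \<Omega> \<rho> \<sigma>) = mat_rank \<Omega> \<rho> * \<Omega>}"
proof -
  have rc: "\<rho> \<in> carrier_mat \<Omega> \<Omega>" and h: "mat_adjoint \<rho> = \<rho>" and tr: "mtrace \<rho> = 1"
    using assms unfolding density_matrix_def hermitian_mat_def by auto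
  obtain U D where uU: "unitary \<Omega> U" and D: "D \<in> carrier_mat \<Omega> \<Omega>" and dD: "diagonal_mat D"
    and rho: "\<rho> = U * D * mat_adjoint U"
    using hermitian_decomp[OF rc h] by blast
  have rk: "mat_rank \<Omega> \<rho> = card {k. k < \<Omega> \<and> D $$ (k,k) \<noteq> 0}"
    by (rule rank_decomp[OF uU D dD rho])
  have n: "\<Omega> > 0"
  proof (rule ccontr)
    assume "\<not> \<Omega> > 0"
    then have "\<Omega> = 0" by simp
    then have "mtrace \<rho> = 0" using rc unfolding mtrace_def by auto
    then show False using tr by simp
  qed
  show ?thesis
    unfolding rk using part1[OF uU D dD rho] part2[OF uU D dD rho n] by auto
qed

end
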